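(* Let $\beta_1,\dots,\beta_N>0$ and $u,v\in\mathbb R$ with $\beta_i+u>0$ and $\beta_i+v>0$ for all $i$. Then $\mathbb E^{\boldsymbol\beta,\boldsymbol\beta}_{\mathrm{LGRW}}\big[V(\mathbf L)\big]<\infty$, where $V(\mathbf L)=\big(\sum_{j=1}^Ne^{L_2(j)-L_1(j-1)}\big)^{-(u+v)}e^{-v(L_1(N)-L_2(N))}$.
   Context: Under $\mathbb P^{\boldsymbol\beta,\boldsymbol\beta}_{\mathrm{LGRW}}$, $\mathbf L_1=(L_1(j))_{0\le j\le N}$ and $\mathbf L_2=(L_2(j))_{0\le j\le N}$ are independent random walks with $L_1(0)=L_2(0)=0$ and independent increments $L_i(j)-L_i(j-1)\sim\log\Gamma^{-1}(\beta_j)$, i.e. with density $e^{-\beta_jy-e^{-y}}/\Gamma(\beta_j)$ on $\mathbb R$; $\mathbf L=(\mathbf L_1,\mathbf L_2)$. *)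

theory Defs
  imports "HOL-Probability.Probability"
begin

definition lgi_density :: "real \<Rightarrow> real \<Rightarrow> real" where
  "lgi_density b y = exp (- b * y - exp (- y)) / Gamma b"

definition incr_law :: "nat \<Rightarrow> (nat \<Rightarrow> real) \<Rightarrow> (nat \<Rightarrow> real) measure" where
  "incr_law N \<beta> = PiM {1..N} (\<lambda>j. density lborel (\<lambda>y. ennreal (lgi_density (\<beta> j) y)))"

text \<open>P^{beta,beta}_LGRW, realised as the law of the pair of increment sequences
  of the two independent walks L_1, L_2.\<close>
definition LGRW :: "nat \<Rightarrow> (nat \<Rightarrow> real) \<Rightarrow> ((nat \<Rightarrow> real) \<times> (nat \<Rightarrow> real)) measure" where
  "LGRW N \<beta> = incr_law N \<beta> \<Otimes>\<^sub>M incr_law N \<beta>"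

definition walk :: "(nat \<Rightarrow> real) \<Rightarrow> nat \<Rightarrow> real" where
  "walk x j = (\<Sum>i\<in>{1..j}. x i)"

definition V :: "nat \<Rightarrow> real \<Rightarrow> real \<Rightarrow> (nat \<Rightarrow> real) \<Rightarrow> (nat \<Rightarrow> real) \<Rightarrow> real" where
  "V N u v L1 L2 = (\<Sum>j\<in>{1..N}. exp (L2 j - L1 (j - 1))) powr (- (u + v))
                    * exp (- v * (L1 N - L2 N))"

end

theory Submission
  imports Defs "HOL-Real_Asymp.Real_Asymp"
begin

lemma expo_half:
  fixes a C :: real assumes "a > 0" "C \<ge> 0"
  shows "(\<integral>\<^sup>+y. ennreal (C * exp (- a * y)) * indicator {0..} y \<partial>lborel) < \<infinity>"
proof -
  have "(\<integral>\<^sup>+y. ennreal (C * exp (- a * y)) * indicator {0..} y \<partial>lborel)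
        = ennreal (0 - (- C * exp (- a * 0) / a))"
  proof (rule nn_integral_FTC_atLeast)
    show "(\<lambda>y. C * exp (- a * y)) \<in> borel_measurable borel" by measurable
    show "\<And>x. 0 \<le> x \<Longrightarrow> ((\<lambda>y. - C * exp (- a * y) / a) has_real_derivative C * exp (- a * x)) (at x)"
      using assms by (auto intro!: derivative_eq_intros)
    show "\<And>x. 0 \<le> x \<Longrightarrow> 0 \<le> C * exp (- a * x)" using assms by simp
    show "((\<lambda>y. - C * exp (- a * y) / a) \<longlongrightarrow> 0) at_top" using assms by real_asymp
  qed
  then show ?thesis by simp
qed

lemma core_int:
  fixes s :: real assumes s: "s > 0"
  shows "(\<integral>\<^sup>+y. ennreal (exp (- s * y - exp (- y))) \<partial>lborel) < \<infinity>"
proof -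
  define f where "f y = exp (- s * y - exp (- y))" for y
  have fm[measurable]: "f \<in> borel_measurable borel" unfolding f_def by measurable
  have split: "(\<integral>\<^sup>+y. ennreal (f y) \<partial>lborel) = (\<integral>\<^sup>+y. ennreal (f y) * indicator {0..} y \<partial>lborel)
     + (\<integral>\<^sup>+y. ennreal (f y) * indicator {..<0} y \<partial>lborel)"
    by (subst nn_integral_add[symmetric]) (auto intro!: nn_integral_cong split: split_indicator)
  have p1: "(\<integral>\<^sup>+y. ennreal (f y) * indicator {0..} y \<partial>lborel) \<le> (\<integral>\<^sup>+y. ennreal (1 * exp (- s * y)) * indicator {0..} y \<partial>lborel)"
    by (intro nn_integral_mono) (auto simp: f_def split: split_indicator)
  have "(\<integral>\<^sup>+y. ennreal (f y) * indicator {..<0} y \<partial>lborel)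
      = (\<integral>\<^sup>+y. ennreal (f y) * indicator {..<0} y \<partial>distr lborel borel uminus)"
    by (simp add: lborel_distr_uminus)
  also have "\<dots> = (\<integral>\<^sup>+y. ennreal (f (- y)) * indicator {..<0} (- y) \<partial>lborel)"
    by (subst nn_integral_distr) auto
  also have "\<dots> \<le> (\<integral>\<^sup>+y. ennreal (exp (s^2) * exp (- 1 * y)) * indicator {0..} y \<partial>lborel)"
  proof (intro nn_integral_mono)
    fix z :: real
    show "ennreal (f (- z)) * indicator {..<0} (- z) \<le> ennreal (exp (s^2) * exp (- 1 * z)) * indicator {0..} z"
    proof (cases "z > 0")
      case True
      have e: "exp (z/2) \<ge> 1 + z/2" by (rule exp_ge_add_one_self)
      have "(1 + z/2)^2 \<le> exp (z/2) ^2" using e True by (intro power_mono) auto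
      also have "exp (z/2)^2 = exp z" by (simp add: exp_double[symmetric] power2_eq_square exp_add[symmetric])
      finally have ez: "1 + z + z^2/4 \<le> exp z" by (simp add: power2_eq_square field_simps)
      have sq: "0 \<le> (z/2 - s)^2" by simp
      have "s * z - exp z \<le> s^2 - z" using ez sq by (simp add: power2_eq_square field_simps) 
      then have "f (- z) \<le> exp (s^2) * exp (- 1 * z)"
        by (simp add: f_def exp_add[symmetric])
      then show ?thesis using True by (auto split: split_indicator)
    qed (auto split: split_indicator)
  qed
  finally have p2: "(\<integral>\<^sup>+y. ennreal (f y) * indicator {..<0} y \<partial>lborel) < \<infinity>"
    using expo_half[of 1 "exp (s^2)"] by (simp add: order_le_less_trans)
  have "(\<integral>\<^sup>+y. ennreal (f y) \<partial>lborel) < \<infinity>"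
    using split p2 order_le_less_trans[OF p1 expo_half[OF s, of 1]] by (simp add: ennreal_add_eq_top less_top)
  then show ?thesis by (simp add: f_def)
qed


lemma lgi_meas[measurable]: "lgi_density b \<in> borel_measurable borel"
  unfolding lgi_density_def by measurable

lemma one_dim:
  fixes b c :: real assumes "c < b" "0 < b"
  shows "(\<integral>\<^sup>+y. ennreal (exp (c * y)) \<partial>density lborel (\<lambda>y. ennreal (lgi_density b y))) < \<infinity>"
proof -
  have "(\<integral>\<^sup>+y. ennreal (exp (c * y)) \<partial>density lborel (\<lambda>y. ennreal (lgi_density b y)))
      = (\<integral>\<^sup>+y. ennreal (lgi_density b y) * ennreal (exp (c * y)) \<partial>lborel)"
    by (subst nn_integral_density) auto
  also have "\<dots> = (\<integral>\<^sup>+y. ennreal (1 / Gamma b) * ennreal (exp (- (b - c) * y - exp (- y))) \<partial>lborel)"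
    using assms by (intro nn_integral_cong) 
      (auto simp: lgi_density_def ennreal_mult'[symmetric] exp_add[symmetric] algebra_simps)
  also have "\<dots> = ennreal (1 / Gamma b) * (\<integral>\<^sup>+y. ennreal (exp (- (b - c) * y - exp (- y))) \<partial>lborel)"
    by (subst nn_integral_cmult) auto
  also have "\<dots> < \<infinity>"
    using core_int[of "b - c"] assms by (simp add: ennreal_mult_less_top)
  finally show ?thesis .
qed

definition MM :: "(nat \<Rightarrow> real) \<Rightarrow> nat \<Rightarrow> real measure" where
  "MM \<beta> j = density lborel (\<lambda>y. ennreal (lgi_density (\<beta> j) y))"

lemma psf: "product_sigma_finite (MM \<beta>)"
  unfolding product_sigma_finite_def MM_def
  by (auto simp: sigma_finite_measure.sigma_finite_iff_density_finite[OF sigma_finite_lborel])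

lemma pi_int:
  fixes a :: "nat \<Rightarrow> real" and \<beta> :: "nat \<Rightarrow> real"
  assumes "\<And>k. k \<in> {1..N} \<Longrightarrow> a k < \<beta> k" "\<And>k. k \<in> {1..N} \<Longrightarrow> 0 < \<beta> k"
  shows "(\<integral>\<^sup>+x. (\<Prod>k\<in>{1..N}. ennreal (exp (a k * x k))) \<partial>incr_law N \<beta>) < \<infinity>"
    and "(\<lambda>x. (\<Prod>k\<in>{1..N}. ennreal (exp (a k * x k)))) \<in> borel_measurable (incr_law N \<beta>)"
proof -
  interpret product_sigma_finite "MM \<beta>" by (rule psf)
  have il: "incr_law N \<beta> = PiM {1..N} (MM \<beta>)" unfolding incr_law_def MM_def ..
  have "(\<integral>\<^sup>+x. (\<Prod>k\<in>{1..N}. ennreal (exp (a k * x k))) \<partial>incr_law N \<beta>)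
    = (\<Prod>k\<in>{1..N}. \<integral>\<^sup>+y. ennreal (exp (a k * y)) \<partial>MM \<beta> k)"
    unfolding il by (subst product_nn_integral_prod) (auto simp: MM_def)
  also have "\<dots> < \<infinity>"
  proof -
    have "\<forall>k\<in>{1..N}. (\<integral>\<^sup>+y. ennreal (exp (a k * y)) \<partial>MM \<beta> k) \<noteq> \<top>"
      using one_dim assms unfolding MM_def by (auto simp: less_top)
    then show ?thesis by (simp add: less_top[symmetric] ennreal_prod_eq_top)
  qed
  finally show "(\<integral>\<^sup>+x. (\<Prod>k\<in>{1..N}. ennreal (exp (a k * x k))) \<partial>incr_law N \<beta>) < \<infinity>" .
  show "(\<lambda>x. (\<Prod>k\<in>{1..N}. ennreal (exp (a k * x k)))) \<in> borel_measurable (incr_law N \<beta>)"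
  proof -
    have c: "(\<lambda>x. x k) \<in> borel_measurable (PiM {1..N} (MM \<beta>))" if "k \<in> {1..N}" for k
    proof -
      have "(\<lambda>x. x k) \<in> measurable (PiM {1..N} (MM \<beta>)) (MM \<beta> k)"
        using that by (rule measurable_component_singleton)
      moreover have "sets (MM \<beta> k) = sets borel" by (simp add: MM_def)
      ultimately show ?thesis by (simp add: measurable_def space_borel)
    qed
    show ?thesis unfolding il
      by (intro borel_measurable_prod_ennreal measurable_compose[OF c]) auto
  qed
qed


lemma sf_incr: "sigma_finite_measure (incr_law N \<beta>)"
proof -
  interpret product_sigma_finite "MM \<beta>" by (rule psf)
  show ?thesis unfolding incr_law_def MM_def[symmetric] by (rule sigma_finite) simp
qed

lemma key:
  fixes a b :: "nat \<Rightarrow> real" and \<beta> :: "nat \<Rightarrow> real"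
  assumes "\<And>k. k \<in> {1..N} \<Longrightarrow> a k < \<beta> k" "\<And>k. k \<in> {1..N} \<Longrightarrow> b k < \<beta> k"
    "\<And>k. k \<in> {1..N} \<Longrightarrow> 0 < \<beta> k"
  shows "(\<integral>\<^sup>+\<omega>. ennreal (exp (\<Sum>k\<in>{1..N}. a k * fst \<omega> k + b k * snd \<omega> k)) \<partial>LGRW N \<beta>) < \<infinity>"
    and "(\<lambda>\<omega>. ennreal (exp (\<Sum>k\<in>{1..N}. a k * fst \<omega> k + b k * snd \<omega> k))) \<in> borel_measurable (LGRW N \<beta>)"
proof -
  interpret sigma_finite_measure "incr_law N \<beta>" by (rule sf_incr)
  define F where "F x = (\<Prod>k\<in>{1..N}. ennreal (exp (a k * x k)))" for x
  define G where "G x = (\<Prod>k\<in>{1..N}. ennreal (exp (b k * x k)))" for x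
  note FI = pi_int[of N a \<beta>, folded F_def] and GI = pi_int[of N b \<beta>, folded G_def]
  have Fm[measurable]: "F \<in> borel_measurable (incr_law N \<beta>)" using FI assms by auto
  have Gm[measurable]: "G \<in> borel_measurable (incr_law N \<beta>)" using GI assms by auto
  have eq: "ennreal (exp (\<Sum>k\<in>{1..N}. a k * fst \<omega> k + b k * snd \<omega> k)) = F (fst \<omega>) * G (snd \<omega>)" for \<omega>
    by (simp add: F_def G_def exp_sum exp_add sum.distrib prod.distrib prod_ennreal ennreal_mult prod_nonneg)
  have "(\<integral>\<^sup>+\<omega>. ennreal (exp (\<Sum>k\<in>{1..N}. a k * fst \<omega> k + b k * snd \<omega> k)) \<partial>LGRW N \<beta>)
     = (\<integral>\<^sup>+\<omega>. F (fst \<omega>) * G (snd \<omega>) \<partial>(incr_law N \<beta> \<Otimes>\<^sub>M incr_law N \<beta>))"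
    unfolding LGRW_def eq ..
  also have "\<dots> = (\<integral>\<^sup>+x. \<integral>\<^sup>+y. F x * G y \<partial>incr_law N \<beta> \<partial>incr_law N \<beta>)"
    by (subst nn_integral_fst[symmetric]) auto
  also have "\<dots> = (\<integral>\<^sup>+x. F x * (\<integral>\<^sup>+y. G y \<partial>incr_law N \<beta>) \<partial>incr_law N \<beta>)"
    by (subst nn_integral_cmult) auto
  also have "\<dots> = (\<integral>\<^sup>+x. F x \<partial>incr_law N \<beta>) * (\<integral>\<^sup>+y. G y \<partial>incr_law N \<beta>)"
    by (subst nn_integral_multc) auto
  also have "\<dots> < \<infinity>" using FI GI assms by (simp add: ennreal_mult_less_top)
  finally show "(\<integral>\<^sup>+\<omega>. ennreal (exp (\<Sum>k\<in>{1..N}. a k * fst \<omega> k + b k * snd \<omega> k)) \<partial>LGRW N \<beta>) < \<infinity>" .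
  show "(\<lambda>\<omega>. ennreal (exp (\<Sum>k\<in>{1..N}. a k * fst \<omega> k + b k * snd \<omega> k))) \<in> borel_measurable (LGRW N \<beta>)"
    unfolding eq LGRW_def by measurable
qed


lemma walk_exp: "j \<le> N \<Longrightarrow> walk x j = (\<Sum>k\<in>{1..N}. (if k \<le> j then 1 else 0) * x k)"
proof -
  assume j: "j \<le> N"
  have "(\<Sum>k\<in>{1..N}. (if k \<le> j then 1 else 0) * x k) = (\<Sum>k\<in>{1..N}. if k \<in> {..j} then x k else 0)"
    by (intro sum.cong) auto
  also have "\<dots> = (\<Sum>k\<in>{1..N} \<inter> {..j}. x k)" by (simp only: sum.inter_restrict finite_atLeastAtMost)
  also have "{1..N} \<inter> {..j} = {1..j}" using j by auto
  finally show ?thesis by (simp add: walk_def)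
qed

lemma ident1:
  fixes x y :: "nat \<Rightarrow> real" and u v t :: real assumes N: "N \<ge> 1"
  shows "(\<Sum>k\<in>{1..N}. ((u+v)*t*(if k \<le> N-1 then 1 else 0) - v) * x k
            + (v - (u+v)*((1-t)*(if k \<le> 1 then 1 else 0) + t)) * y k)
    = - (u+v) * ((1-t)*(walk y 1 - walk x 0) + t*(walk y N - walk x (N-1))) - v * (walk x N - walk y N)"
proof -
  have w0: "walk x 0 = (\<Sum>k\<in>{1..N}. 0 * x k)" by (simp add: walk_def)
  have e1: "walk y 1 = (\<Sum>k\<in>{1..N}. (if k \<le> 1 then 1 else 0) * y k)" using N by (rule walk_exp)
  have e2: "walk y N = (\<Sum>k\<in>{1..N}. (if k \<le> N then 1 else 0) * y k)" by (rule walk_exp) simp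
  have e3: "walk x N = (\<Sum>k\<in>{1..N}. (if k \<le> N then 1 else 0) * x k)" by (rule walk_exp) simp
  have e4: "walk x (N-1) = (\<Sum>k\<in>{1..N}. (if k \<le> N-1 then 1 else 0) * x k)" by (rule walk_exp) simp
  show ?thesis
    unfolding w0 e1 e2 e3 e4
    apply (simp only: sum_distrib_left sum_subtractf[symmetric] sum.distrib[symmetric])
    apply (intro sum.cong refl)
    apply (auto simp: algebra_simps)
    done
qed

lemma ident2:
  fixes x y :: "nat \<Rightarrow> real" and w v :: real assumes m: "m \<in> {1..N}"
  shows "(\<Sum>k\<in>{1..N}. (-w*(if k \<le> m-1 then 1 else 0) - v) * x k
            + (w*(if k \<le> m then 1 else 0) + v) * y k)
    = w * (walk y m - walk x (m-1)) - v * (walk x N - walk y N)"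
proof -
  have e1: "walk y m = (\<Sum>k\<in>{1..N}. (if k \<le> m then 1 else 0) * y k)" using m by (intro walk_exp) auto
  have e2: "walk y N = (\<Sum>k\<in>{1..N}. (if k \<le> N then 1 else 0) * y k)" by (rule walk_exp) simp
  have e3: "walk x N = (\<Sum>k\<in>{1..N}. (if k \<le> N then 1 else 0) * x k)" by (rule walk_exp) simp
  have e4: "walk x (m-1) = (\<Sum>k\<in>{1..N}. (if k \<le> m-1 then 1 else 0) * x k)" using m by (intro walk_exp) auto
  show ?thesis
    unfolding e1 e2 e3 e4
    apply (simp only: sum_distrib_left sum_subtractf[symmetric] sum.distrib[symmetric])
    apply (intro sum.cong refl)
    apply (auto simp: algebra_simps)
    done
qed


theorem proposition3p15:
  fixes N :: nat and \<beta> :: "nat \<Rightarrow> real" and u v :: real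
  assumes "\<And>i. i \<in> {1..N} \<Longrightarrow> \<beta> i > 0"
      and "\<And>i. i \<in> {1..N} \<Longrightarrow> \<beta> i + u > 0"
      and "\<And>i. i \<in> {1..N} \<Longrightarrow> \<beta> i + v > 0"
  shows "(\<integral>\<^sup>+ \<omega>. ennreal (V N u v (walk (fst \<omega>)) (walk (snd \<omega>))) \<partial>LGRW N \<beta>) < \<infinity>"
proof (cases "N = 0")
  case True
  then show ?thesis by (simp add: V_def)
next
  case False
  then have N: "N \<ge> 1" by simp
  define A where "A \<omega> j = walk (snd \<omega>) j - walk (fst \<omega>) (j - 1)" for \<omega> :: "(nat \<Rightarrow> real) \<times> (nat \<Rightarrow> real)" and j
  define S where "S \<omega> = (\<Sum>j\<in>{1..N}. exp (A \<omega> j))" for \<omega>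
  define D where "D \<omega> = walk (fst \<omega>) N - walk (snd \<omega>) N" for \<omega>
  have Vd: "V N u v (walk (fst \<omega>)) (walk (snd \<omega>)) = S \<omega> powr (- (u + v)) * exp (- v * D \<omega>)" for \<omega>
    by (simp add: V_def S_def A_def D_def)
  have Spos: "S \<omega> > 0" for \<omega>
    unfolding S_def using N by (intro sum_pos) auto
  have Sge: "exp (A \<omega> j) \<le> S \<omega>" if "j \<in> {1..N}" for \<omega> j
    unfolding S_def using that by (intro member_le_sum) auto
  show ?thesis
  proof (cases "u + v > 0")
    case True
    obtain t :: real where t: "0 \<le> t" "t \<le> 1" "\<And>k. k \<in> {1..N} \<Longrightarrow> \<bar>(u+v)*t - v\<bar> < \<beta> k"
    proof (cases "v < 0")
      case True
      have "\<bar>(u+v)*0 - v\<bar> < \<beta> k" if "k \<in> {1..N}" for k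
        using assms(3)[OF that] True by simp
      then show ?thesis by (intro that[of 0]) auto
    next
      case v: False
      show ?thesis
      proof (cases "u < 0")
        case True
        have "\<bar>(u+v)*1 - v\<bar> < \<beta> k" if "k \<in> {1..N}" for k
          using assms(2)[OF that] True by simp
        then show ?thesis by (intro that[of 1]) auto
      next
        case False
        have "\<bar>(u+v)*(v/(u+v)) - v\<bar> < \<beta> k" if "k \<in> {1..N}" for k
          using assms(1)[OF that] \<open>u+v>0\<close> by simp
        then show ?thesis using False v \<open>u+v>0\<close> by (intro that[of "v/(u+v)"]) auto
      qed
    qed
    define a where "a k = (u+v)*t*(if k \<le> N-1 then 1 else 0) - v" for k :: nat
    define b where "b k = v - (u+v)*((1-t)*(if k \<le> 1 then 1 else 0) + t)" for k :: nat
    have bound: "ennreal (V N u v (walk (fst \<omega>)) (walk (snd \<omega>)))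
        \<le> ennreal (exp (\<Sum>k\<in>{1..N}. a k * fst \<omega> k + b k * snd \<omega> k))" for \<omega>
    proof -
      have l1: "A \<omega> 1 \<le> ln (S \<omega>)" using Sge[of 1 \<omega>] N Spos[of \<omega>] by (simp add: ln_ge_iff)
      have l2: "A \<omega> N \<le> ln (S \<omega>)" using Sge[of N \<omega>] N Spos[of \<omega>] by (simp add: ln_ge_iff)
      have "(1-t) * A \<omega> 1 + t * A \<omega> N \<le> (1-t) * ln (S \<omega>) + t * ln (S \<omega>)"
        using l1 l2 t by (intro add_mono mult_left_mono) auto
      then have cv: "(1-t) * A \<omega> 1 + t * A \<omega> N \<le> ln (S \<omega>)" by (simp add: algebra_simps)
      have "S \<omega> powr (- (u + v)) = exp (- (u+v) * ln (S \<omega>))"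
        using Spos[of \<omega>] by (simp add: powr_def)
      also have "\<dots> \<le> exp (- (u+v) * ((1-t) * A \<omega> 1 + t * A \<omega> N))"
        using cv True by simp
      finally have "V N u v (walk (fst \<omega>)) (walk (snd \<omega>))
          \<le> exp (- (u+v) * ((1-t) * A \<omega> 1 + t * A \<omega> N)) * exp (- v * D \<omega>)"
        unfolding Vd by (intro mult_right_mono) auto
      also have "\<dots> = exp (\<Sum>k\<in>{1..N}. a k * fst \<omega> k + b k * snd \<omega> k)"
        unfolding a_def b_def ident1[OF N] by (simp add: A_def D_def exp_add[symmetric] algebra_simps)
      finally show ?thesis by (intro ennreal_leI)
    qed
    have ab: "a k < \<beta> k" "b k < \<beta> k" if "k \<in> {1..N}" for k
      using t(3)[OF that] assms(2,3)[OF that] that by (auto simp: a_def b_def abs_less_iff)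
    have "(\<integral>\<^sup>+ \<omega>. ennreal (V N u v (walk (fst \<omega>)) (walk (snd \<omega>))) \<partial>LGRW N \<beta>)
        \<le> (\<integral>\<^sup>+\<omega>. ennreal (exp (\<Sum>k\<in>{1..N}. a k * fst \<omega> k + b k * snd \<omega> k)) \<partial>LGRW N \<beta>)"
      by (intro nn_integral_mono bound)
    also have "\<dots> < \<infinity>" by (rule key(1)) (use ab assms(1) in auto)
    finally show ?thesis .
  next
    case False
    define w where "w = - (u + v)"
    have w: "w \<ge> 0" using False by (simp add: w_def)
    define a where "a m k = -w*(if k \<le> m-1 then 1 else 0) - v" for m k :: nat
    define b where "b m k = w*(if k \<le> m then 1 else 0) + v" for m k :: nat
    have bound: "ennreal (V N u v (walk (fst \<omega>)) (walk (snd \<omega>)))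
        \<le> ennreal (real N powr w) * (\<Sum>m\<in>{1..N}. ennreal (exp (\<Sum>k\<in>{1..N}. a m k * fst \<omega> k + b m k * snd \<omega> k)))" for \<omega>
    proof -
      have fin: "finite (A \<omega> ` {1..N})" "A \<omega> ` {1..N} \<noteq> {}" using N by auto
      obtain m where m: "m \<in> {1..N}" "A \<omega> m = Max (A \<omega> ` {1..N})"
        using Max_in[OF fin] by auto
      have mx: "A \<omega> j \<le> A \<omega> m" if "j \<in> {1..N}" for j
        using m(2) Max_ge[OF fin(1)] that by auto
      have "S \<omega> \<le> (\<Sum>j\<in>{1..N}. exp (A \<omega> m))"
        unfolding S_def using mx by (intro sum_mono) auto
      also have "\<dots> = real N * exp (A \<omega> m)" by simp
      finally have "S \<omega> powr w \<le> (real N * exp (A \<omega> m)) powr w"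
        using w Spos[of \<omega>] by (intro powr_mono2) auto
      also have "\<dots> = real N powr w * exp (w * A \<omega> m)"
        by (simp add: powr_mult exp_powr_real mult.commute)
      also have "\<dots> \<le> real N powr w * (\<Sum>j\<in>{1..N}. exp (w * A \<omega> j))"
        using m(1) by (intro mult_left_mono member_le_sum) auto
      finally have "V N u v (walk (fst \<omega>)) (walk (snd \<omega>))
          \<le> real N powr w * (\<Sum>j\<in>{1..N}. exp (w * A \<omega> j)) * exp (- v * D \<omega>)"
        unfolding Vd w_def by (intro mult_right_mono) auto
      also have "\<dots> = real N powr w * (\<Sum>j\<in>{1..N}. exp (\<Sum>k\<in>{1..N}. a j k * fst \<omega> k + b j k * snd \<omega> k))"
      proof -
        have "exp (w * A \<omega> j) * exp (- v * D \<omega>) = exp (\<Sum>k\<in>{1..N}. a j k * fst \<omega> k + b j k * snd \<omega> k)"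
          if "j \<in> {1..N}" for j
          unfolding a_def b_def ident2[OF that] by (simp add: A_def D_def exp_add[symmetric])
        then show ?thesis by (simp add: sum_distrib_right mult.assoc)
      qed
      finally have "ennreal (V N u v (walk (fst \<omega>)) (walk (snd \<omega>)))
         \<le> ennreal (real N powr w * (\<Sum>j\<in>{1..N}. exp (\<Sum>k\<in>{1..N}. a j k * fst \<omega> k + b j k * snd \<omega> k)))"
        by (rule ennreal_leI)
      also have "\<dots> = ennreal (real N powr w) * ennreal (\<Sum>j\<in>{1..N}. exp (\<Sum>k\<in>{1..N}. a j k * fst \<omega> k + b j k * snd \<omega> k))"
        by (rule ennreal_mult) (auto intro: sum_nonneg)
      finally show ?thesis by simp
    qed
    have ab: "a m k < \<beta> k" "b m k < \<beta> k" if "k \<in> {1..N}" for m k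
      using assms(2,3)[OF that] False that by (auto simp: a_def b_def w_def)
    have "(\<integral>\<^sup>+ \<omega>. ennreal (V N u v (walk (fst \<omega>)) (walk (snd \<omega>))) \<partial>LGRW N \<beta>)
        \<le> (\<integral>\<^sup>+\<omega>. ennreal (real N powr w) * (\<Sum>m\<in>{1..N}. ennreal (exp (\<Sum>k\<in>{1..N}. a m k * fst \<omega> k + b m k * snd \<omega> k))) \<partial>LGRW N \<beta>)"
      by (intro nn_integral_mono bound)
    also have "\<dots> = ennreal (real N powr w) * (\<Sum>m\<in>{1..N}. \<integral>\<^sup>+\<omega>. ennreal (exp (\<Sum>k\<in>{1..N}. a m k * fst \<omega> k + b m k * snd \<omega> k)) \<partial>LGRW N \<beta>)"
    proof -
      have ms: "(\<lambda>\<omega>. ennreal (exp (\<Sum>k\<in>{1..N}. a m k * fst \<omega> k + b m k * snd \<omega> k))) \<in> borel_measurable (LGRW N \<beta>)" for m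
        using ab assms(1) by (intro key(2)) auto
      have "(\<lambda>\<omega>. \<Sum>m\<in>{1..N}. ennreal (exp (\<Sum>k\<in>{1..N}. a m k * fst \<omega> k + b m k * snd \<omega> k))) \<in> borel_measurable (LGRW N \<beta>)"
        using ms by (intro borel_measurable_sum) auto
      then have "(\<integral>\<^sup>+\<omega>. ennreal (real N powr w) * (\<Sum>m\<in>{1..N}. ennreal (exp (\<Sum>k\<in>{1..N}. a m k * fst \<omega> k + b m k * snd \<omega> k))) \<partial>LGRW N \<beta>)
         = ennreal (real N powr w) * (\<integral>\<^sup>+\<omega>. (\<Sum>m\<in>{1..N}. ennreal (exp (\<Sum>k\<in>{1..N}. a m k * fst \<omega> k + b m k * snd \<omega> k))) \<partial>LGRW N \<beta>)"
        by (rule nn_integral_cmult)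
      also have "(\<integral>\<^sup>+\<omega>. (\<Sum>m\<in>{1..N}. ennreal (exp (\<Sum>k\<in>{1..N}. a m k * fst \<omega> k + b m k * snd \<omega> k))) \<partial>LGRW N \<beta>)
         = (\<Sum>m\<in>{1..N}. \<integral>\<^sup>+\<omega>. ennreal (exp (\<Sum>k\<in>{1..N}. a m k * fst \<omega> k + b m k * snd \<omega> k)) \<partial>LGRW N \<beta>)"
        by (rule nn_integral_sum) (rule ms)
      finally show ?thesis .
    qed
    also have "\<dots> < \<infinity>"
      using key(1)[of N "a _" \<beta> "b _"] ab assms(1) by (simp add: ennreal_mult_less_top)
    finally show ?thesis .
  qed
qed

end
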